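(* Let $\omega=\omega_0\omega_1\cdots$ be an infinite sequence over $\{b,c,d\}$ which is not eventually constant. Then for each $n\ge0$ there is a nontrivial element $t\in\mathrm{Rist}_{G_\omega}(1^n)$ with word length at most $2^{n+2}$ with respect to the generators $a,b,c,d$.
   Context: Let $\mathbf{T}=\{0,1\}^*$ be the rooted binary tree of finite binary strings, and $a$ the automorphism flipping the first bit of a string ($a$ fixes the empty string). For each $x\in\{b,c,d\}$ and $n\ge0$, the automorphism $x_n$ is defined by $x_n(1^j)=1^j$ for all $j\ge0$, and $x_n(1^j0s)=1^j0s$ if $\omega_{n+j}=x$, $x_n(1^j0s)=1^j0a(s)$ if $\omega_{n+j}\ne x$, for all $j\ge0$ and strings $s$. Write $b=b_0,c=c_0,d=d_0$; the generalized Grigorchuk group is $G_\omega=\langle a,b,c,d\rangle$. For a string $s$, $\mathrm{Rist}(s)$ is the group of automorphisms of $\mathbf{T}$ fixing every string not beginning with $s$, and $\mathrm{Rist}_{G_\omega}(s)=G_\omega\cap\mathrm{Rist}(s)$. *)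

theory Defs
  imports Main "HOL-Library.Sublist"
begin

text \<open>Vertices of the binary tree: finite binary strings; False = 0, True = 1.\<close>

datatype letter = LB | LC | LD

datatype gen = GA | GB | GC | GD

fun flip :: "bool list \<Rightarrow> bool list" where
  "flip [] = []"
| "flip (x # s) = (\<not> x) # s"

fun xgen :: "(nat \<Rightarrow> letter) \<Rightarrow> letter \<Rightarrow> nat \<Rightarrow> bool list \<Rightarrow> bool list" where
  "xgen w x n [] = []"
| "xgen w x n (True # s) = True # xgen w x (Suc n) s"
| "xgen w x n (False # s) = False # (if w n = x then s else flip s)"

fun gen_act :: "(nat \<Rightarrow> letter) \<Rightarrow> gen \<Rightarrow> bool list \<Rightarrow> bool list" where
  "gen_act w GA = flip"
| "gen_act w GB = xgen w LB 0"
| "gen_act w GC = xgen w LC 0"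
| "gen_act w GD = xgen w LD 0"

text \<open>Evaluation of a word in the generators (generators are involutions,
  so words over a,b,c,d describe all of G_omega).\<close>
definition word_eval :: "(nat \<Rightarrow> letter) \<Rightarrow> gen list \<Rightarrow> bool list \<Rightarrow> bool list" where
  "word_eval w ws = foldr (\<lambda>g f. gen_act w g \<circ> f) ws id"

definition in_rist :: "bool list \<Rightarrow> (bool list \<Rightarrow> bool list) \<Rightarrow> bool" where
  "in_rist s t \<longleftrightarrow> (\<forall>v. \<not> prefix s v \<longrightarrow> t v = v)"

definition eventually_constant :: "(nat \<Rightarrow> 'a) \<Rightarrow> bool" where
  "eventually_constant w \<longleftrightarrow> (\<exists>N x. \<forall>m\<ge>N. w m = x)"

end

theory Submission imports Defs begin

definition T :: "(bool list \<Rightarrow> bool list) \<Rightarrow> (bool list \<Rightarrow> bool list) \<Rightarrow> bool list \<Rightarrow> bool list" where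
 "T f0 f1 s = (case s of [] \<Rightarrow> [] | b # r \<Rightarrow> b # (if b then f1 r else f0 r))"

lemma T_simps[simp]: "T f0 f1 [] = []" "T f0 f1 (True#r) = True # f1 r" "T f0 f1 (False#r) = False # f0 r"
  by (simp_all add: T_def)

lemma T_comp: "T f0 f1 \<circ> T g0 g1 = T (f0 \<circ> g0) (f1 \<circ> g1)"
proof
  fix s show "(T f0 f1 \<circ> T g0 g1) s = T (f0 \<circ> g0) (f1 \<circ> g1) s"
    by (cases s) (auto simp: T_def)
qed

lemma T_eq_id: "T f0 f1 = id \<longleftrightarrow> f0 = id \<and> f1 = id"
proof
  assume h: "T f0 f1 = id"
  have "f0 r = r" for r using fun_cong[OF h, of "False # r"] by simp
  moreover have "f1 r = r" for r using fun_cong[OF h, of "True # r"] by simp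
  ultimately show "f0 = id \<and> f1 = id" by auto
next
  assume "f0 = id \<and> f1 = id"
  then show "T f0 f1 = id" by (auto simp: T_def fun_eq_iff split: list.split)
qed

lemma flip_T: "flip \<circ> T f0 f1 \<circ> flip = T f1 f0"
proof
  fix s show "(flip \<circ> T f0 f1 \<circ> flip) s = T f1 f0 s"
    by (cases s) (auto simp: T_def)
qed

lemma flip_flip: "flip \<circ> flip = id"
proof
  fix s show "(flip \<circ> flip) s = id s" by (cases s) auto
qed

lemma xgen_T: "xgen w x n = T (if w n = x then id else flip) (xgen w x (Suc n))"
proof
  fix s show "xgen w x n s = T (if w n = x then id else flip) (xgen w x (Suc n)) s"
    by (cases s) (auto simp: T_def)
qed

lemma xgen_inv_pt: "xgen w x n (xgen w x n s) = s"
proof (induction s arbitrary: n)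
  case Nil then show ?case by simp
next
  case (Cons b s) then show ?case
    using fun_cong[OF flip_flip, of s] by (cases b) auto
qed

lemma xgen_inv: "xgen w x n \<circ> xgen w x n = id"
  by (rule ext) (simp add: xgen_inv_pt)

lemma xgen_nontriv:
  "xgen w L m (replicate d True @ [False, False]) = replicate d True @ [False, True]"
  if "w (m + d) \<noteq> L" for d m
  using that
proof (induction d arbitrary: m)
  case 0 then show ?case by simp
next
  case (Suc d) then show ?case by (simp add: add_Suc_right[symmetric] del: add_Suc_right)
qed

fun lt :: "gen \<Rightarrow> letter" where "lt GB = LB" | "lt GC = LC" | "lt GD = LD" | "lt GA = LB"
fun gl :: "letter \<Rightarrow> gen" where "gl LB = GB" | "gl LC = GC" | "gl LD = GD"
fun nxt :: "letter \<Rightarrow> letter" where "nxt LB = LC" | "nxt LC = LD" | "nxt LD = LB"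

lemma lt_gl[simp]: "lt (gl L) = L" by (cases L) auto
lemma gl_ne[simp]: "gl L \<noteq> GA" by (cases L) auto
lemma nxt_ne[simp]: "nxt L \<noteq> L" by (cases L) auto

definition ge :: "(nat\<Rightarrow>letter) \<Rightarrow> nat \<Rightarrow> gen \<Rightarrow> bool list \<Rightarrow> bool list" where
 "ge w m g = (if g = GA then flip else xgen w (lt g) m)"

definition we :: "(nat\<Rightarrow>letter) \<Rightarrow> nat \<Rightarrow> gen list \<Rightarrow> bool list \<Rightarrow> bool list" where
 "we w m ws = foldr (\<lambda>g f. ge w m g \<circ> f) ws id"

lemma we_Nil[simp]: "we w m [] = id" by (simp add: we_def)
lemma we_Cons[simp]: "we w m (g # ws) = ge w m g \<circ> we w m ws" by (simp add: we_def)
lemma we_append: "we w m (xs @ ys) = we w m xs \<circ> we w m ys"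
  by (induction xs) (auto simp: o_assoc)

lemma word_eval_we: "word_eval w ws = we w 0 ws"
proof (induction ws)
  case Nil then show ?case by (simp add: word_eval_def)
next
  case (Cons g ws)
  have "gen_act w g = ge w 0 g" by (cases g) (auto simp: ge_def)
  with Cons show ?case by (simp add: word_eval_def)
qed

lemma ge_inv: "ge w m g \<circ> ge w m g = id"
  by (simp add: ge_def flip_flip xgen_inv)

lemma we_rev_inv: "we w m (rev ws) \<circ> we w m ws = id"
proof (induction ws)
  case Nil then show ?case by simp
next
  case (Cons g ws)
  have "we w m (rev (g#ws)) \<circ> we w m (g#ws) = we w m (rev ws) \<circ> (ge w m g \<circ> ge w m g) \<circ> we w m ws"
    by (simp add: we_append o_assoc)
  also have "\<dots> = we w m (rev ws) \<circ> we w m ws" by (simp add: ge_inv)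
  also have "\<dots> = id" by (rule Cons.IH)
  finally show ?case .
qed

definition lift :: "gen \<Rightarrow> gen list \<Rightarrow> gen list" where
 "lift z ws = concat (map (\<lambda>g. if g = GA then [GA, z, GA] else [g]) ws)"

lemma lift_Nil[simp]: "lift z [] = []" by (simp add: lift_def)
lemma lift_Cons[simp]: "lift z (g # ws) = (if g = GA then [GA, z, GA] else [g]) @ lift z ws"
  by (simp add: lift_def)

lemma lift_rev: "rev (lift z ws) = lift z (rev ws)"
  by (induction ws) (auto simp: lift_def)

definition ee :: "letter \<Rightarrow> gen \<Rightarrow> bool list \<Rightarrow> bool list" where
 "ee L g = (if lt g = L then id else flip)"

definition sig :: "(bool list \<Rightarrow> bool list) \<Rightarrow> letter \<Rightarrow> gen list \<Rightarrow> bool list \<Rightarrow> bool list" where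
 "sig c L ws = foldr (\<lambda>g f. (if g = GA then c else ee L g) \<circ> f) ws id"

lemma sig_Nil[simp]: "sig c L [] = id" by (simp add: sig_def)
lemma sig_Cons[simp]: "sig c L (g # ws) = (if g = GA then c else ee L g) \<circ> sig c L ws"
  by (simp add: sig_def)
lemma sig_append: "sig c L (xs @ ys) = sig c L xs \<circ> sig c L ys"
  by (induction xs) (auto simp: o_assoc)

lemma sig_lift: "z \<noteq> GA \<Longrightarrow> sig c L (lift z ws) = sig (c \<circ> ee L z \<circ> c) L ws"
  by (induction ws) (auto simp: sig_append o_assoc)

lemma lift_we:
  assumes "z \<noteq> GA" "lt z \<noteq> w m"
  shows "we w m (lift z ws) = T (sig (ge w (Suc m) z) (w m) ws) (we w (Suc m) ws)"
proof (induction ws)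
  case Nil then show ?case by (metis T_eq_id we_Nil sig_Nil lift_Nil)
next
  case (Cons g ws)
  have piece: "we w m (if g = GA then [GA, z, GA] else [g])
      = T (if g = GA then ge w (Suc m) z else ee (w m) g) (ge w (Suc m) g)"
  proof (cases "g = GA")
    case True
    have "flip \<circ> (xgen w (lt z) m \<circ> flip) = flip \<circ> xgen w (lt z) m \<circ> flip" by (simp add: o_assoc)
    also have "\<dots> = T (xgen w (lt z) (Suc m)) flip"
      using assms by (subst xgen_T) (simp add: flip_T)
    finally show ?thesis using True assms by (simp add: ge_def)
  next
    case False
    then show ?thesis using xgen_T[of w "lt g" m] by (auto simp: ge_def ee_def)
  qed
  have "we w m (lift z (g # ws)) = we w m (if g = GA then [GA, z, GA] else [g]) \<circ> we w m (lift z ws)"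
    by (simp add: we_append)
  also have "\<dots> = T ((if g = GA then ge w (Suc m) z else ee (w m) g) \<circ> sig (ge w (Suc m) z) (w m) ws)
       (ge w (Suc m) g \<circ> we w (Suc m) ws)"
    by (simp only: piece Cons T_comp)
  also have "\<dots> = T (sig (ge w (Suc m) z) (w m) (g # ws)) (we w (Suc m) (g # ws))"
    by simp
  finally show ?case .
qed

fun Bk :: "(nat \<Rightarrow> letter) \<Rightarrow> nat \<Rightarrow> nat \<Rightarrow> gen list" where
  "Bk w 0 m = [GA]"
| "Bk w (Suc k) m = lift (gl (if 0 < m \<and> w (m-1) \<noteq> w m then w (m-1) else nxt (w m))) (Bk w k (Suc m))"

definition zeta where "zeta w m = gl (if 0 < m \<and> w (m-1) \<noteq> w m then w (m-1) else nxt (w m))"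

lemma zeta_ok: "zeta w m \<noteq> GA" "lt (zeta w m) \<noteq> w m"
  by (auto simp: zeta_def)

lemma Bk_Suc: "Bk w (Suc k) m = lift (zeta w m) (Bk w k (Suc m))"
  by (simp add: zeta_def)

declare Bk.simps(2)[simp del]

lemma Bk_pal: "rev (Bk w k m) = Bk w k m"
  by (induction k arbitrary: m) (auto simp: lift_rev Bk_Suc)

lemma Bk_inv: "we w m (Bk w k m) \<circ> we w m (Bk w k m) = id"
  using we_rev_inv[of w m "Bk w k m"] Bk_pal by simp

lemma len_lift: "length (lift z ws) = length ws + 2 * length (filter (\<lambda>g. g = GA) ws)"
  by (induction ws) auto
lemma cnt_lift: "z \<noteq> GA \<Longrightarrow> length (filter (\<lambda>g. g = GA) (lift z ws)) = 2 * length (filter (\<lambda>g. g = GA) ws)"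
  by (induction ws) auto

lemma Bk_len: "length (filter (\<lambda>g. g = GA) (Bk w k m)) = 2 ^ k \<and> length (Bk w k m) + 1 = 2 ^ (k + 1)"
  by (induction k arbitrary: m) (auto simp: Bk_Suc len_lift cnt_lift zeta_ok)

definition Pc :: "(bool list \<Rightarrow> bool list) \<Rightarrow> bool" where
  "Pc f \<longleftrightarrow> f \<circ> flip = flip \<circ> f"

lemma Pc_id: "Pc id" by (simp add: Pc_def)
lemma Pc_flip: "Pc flip" by (simp add: Pc_def)
lemma Pc_comp: "Pc f \<Longrightarrow> Pc g \<Longrightarrow> Pc (f \<circ> g)" by (simp add: Pc_def o_assoc) (metis comp_assoc)
lemma Pc_ee: "Pc (ee L g)" by (simp add: ee_def Pc_id Pc_flip)
lemma Pc_sig: "Pc c \<Longrightarrow> Pc (sig c L ws)"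
  by (induction ws) (auto intro!: Pc_comp simp: Pc_id Pc_ee)

lemma ee_inv: "ee L g \<circ> ee L g = id" by (simp add: ee_def flip_flip)

lemma key: "\<forall>(c::bool list \<Rightarrow> bool list) m. c \<circ> c = id \<longrightarrow> (\<exists>i. m \<le> i \<and> i < m + k \<and> lt (zeta w i) = L) \<longrightarrow> Pc (sig c L (Bk w k m))"
proof (induction k)
  case 0 then show ?case by auto
next
  case (Suc k)
  show ?case
  proof (intro allI impI)
    fix c :: "bool list \<Rightarrow> bool list" and m assume cc: "c \<circ> c = id" and ex: "\<exists>i. m \<le> i \<and> i < m + Suc k \<and> lt (zeta w i) = L"
    have s: "sig c L (Bk w (Suc k) m) = sig (c \<circ> ee L (zeta w m) \<circ> c) L (Bk w k (Suc m))"
      by (simp add: Bk_Suc sig_lift zeta_ok)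
    show "Pc (sig c L (Bk w (Suc k) m))"
    proof (cases "lt (zeta w m) = L")
      case True
      then have "c \<circ> ee L (zeta w m) \<circ> c = id" using cc by (simp add: ee_def)
      then show ?thesis using s Pc_sig[OF Pc_id] by simp
    next
      case False
      then obtain i where "Suc m \<le> i" "i < Suc m + k" "lt (zeta w i) = L" using ex
        by (metis Suc_leI add_Suc_shift le_neq_implies_less)
      moreover have "(c \<circ> ee L (zeta w m) \<circ> c) \<circ> (c \<circ> ee L (zeta w m) \<circ> c) = id"
      proof -
        have "(c \<circ> ee L (zeta w m) \<circ> c) \<circ> (c \<circ> ee L (zeta w m) \<circ> c)
            = c \<circ> ee L (zeta w m) \<circ> (c \<circ> c) \<circ> ee L (zeta w m) \<circ> c" by (simp only: comp_assoc)
        also have "\<dots> = c \<circ> (ee L (zeta w m) \<circ> ee L (zeta w m)) \<circ> c" by (simp only: cc comp_id comp_assoc)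
        also have "\<dots> = id" by (simp only: ee_inv cc comp_id)
        finally show ?thesis .
      qed
      ultimately have "Pc (sig (c \<circ> ee L (zeta w m) \<circ> c) L (Bk w k (Suc m)))"
        using Suc.IH by blast
      then show ?thesis using s by simp
    qed
  qed
qed

lemma exists_zeta:
  assumes "m < n" "w m \<noteq> w (n - 1)"
  shows "\<exists>i. Suc m \<le> i \<and> i < n \<and> lt (zeta w i) = w m"
proof -
  let ?P = "\<lambda>i. m < i \<and> w i \<noteq> w m"
  have Pn: "?P (n - 1)" using assms by (cases "m = n - 1") auto
  define i where "i = (LEAST i. ?P i)"
  have Pi: "?P i" unfolding i_def by (rule LeastI[of ?P, OF Pn])
  have ile: "i \<le> n - 1" unfolding i_def by (rule Least_le[of ?P, OF Pn])
  have prev: "w (i - 1) = w m"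
  proof (cases "i - 1 = m")
    case True then show ?thesis by simp
  next
    case False
    then have lt1: "i - 1 < i" "m < i - 1" using Pi by auto
    have "i - 1 < (LEAST i. ?P i)" using lt1(1) by (simp add: i_def)
    then have "\<not> ?P (i - 1)" by (rule not_less_Least)
    then show ?thesis using \<open>m < i - 1\<close> by auto
  qed
  have "zeta w i = gl (w m)" using Pi prev by (auto simp: zeta_def)
  then show ?thesis using Pi ile assms(1) by (intro exI[of _ i]) auto
qed

lemma in_rist_Nil: "in_rist [] f" by (simp add: in_rist_def)

lemma in_rist_T: "in_rist s f \<Longrightarrow> in_rist (True # s) (T id f)"
  unfolding in_rist_def
proof (intro allI impI)
  fix v assume h: "\<forall>v. \<not> prefix s v \<longrightarrow> f v = v" and np: "\<not> prefix (True # s) v"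
  show "T id f v = v"
  proof (cases v)
    case Nil then show ?thesis by simp
  next
    case (Cons b r)
    then show ?thesis using h np by (cases b) auto
  qed
qed

lemma xgen_ne_id: "\<exists>j\<ge>m. w j \<noteq> L \<Longrightarrow> xgen w L m \<noteq> id"
proof
  assume "\<exists>j\<ge>m. w j \<noteq> L" "xgen w L m = id"
  then obtain j where "j \<ge> m" "w j \<noteq> L" by blast
  then have "w (m + (j - m)) \<noteq> L" by simp
  from xgen_nontriv[of w m "j - m" L, OF this] \<open>xgen w L m = id\<close> show False by simp
qed

lemma main:
  assumes x: "x \<noteq> GA" "lt x = w (n - 1)" and nc: "\<exists>j \<ge> Suc n. w j \<noteq> lt x"
  shows "m + k = n \<Longrightarrow> ge w m x \<circ> we w m (Bk w k m) \<circ> ge w m x \<circ> we w m (Bk w k m) \<noteq> id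
      \<and> in_rist (replicate k True) (ge w m x \<circ> we w m (Bk w k m) \<circ> ge w m x \<circ> we w m (Bk w k m))"
proof (induction k arbitrary: m)
  case 0
  then have mn: "m = n" by simp
  let ?X = "xgen w (lt x) (Suc m)"
  let ?e = "if w m = lt x then id else flip"
  have gx: "ge w m x = T ?e ?X" unfolding ge_def using x(1) xgen_T[of w "lt x" m] by simp
  have "ge w m x \<circ> we w m (Bk w 0 m) \<circ> ge w m x \<circ> we w m (Bk w 0 m)
      = T ?e ?X \<circ> (flip \<circ> T ?e ?X \<circ> flip)"
  proof -
    have wb: "we w m (Bk w 0 m) = flip" by (simp add: ge_def)
    show ?thesis by (simp only: gx wb comp_assoc)
  qed
  also have "\<dots> = T (?e \<circ> ?X) (?X \<circ> ?e)" by (simp add: flip_T T_comp)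
  finally have C: "ge w m x \<circ> we w m (Bk w 0 m) \<circ> ge w m x \<circ> we w m (Bk w 0 m) = T (?e \<circ> ?X) (?X \<circ> ?e)" .
  have "?e \<circ> ?X \<noteq> id"
  proof (cases "w m = lt x")
    case True
    then show ?thesis using xgen_ne_id[of "Suc m" w "lt x"] nc mn by simp
  next
    case False
    show ?thesis
    proof
      assume "?e \<circ> ?X = id"
      then have "(?e \<circ> ?X) [False] = [False]" by simp
      with False show False by simp
    qed
  qed
  then have ne: "T (?e \<circ> ?X) (?X \<circ> ?e) \<noteq> id" using T_eq_id by blast
  show ?case unfolding C replicate_0 using ne in_rist_Nil by blast
next
  case (Suc k)
  then have mn: "m < n" "Suc m + k = n" by auto
  let ?e = "if w m = lt x then id else flip"
  let ?s = "sig (ge w (Suc m) (zeta w m)) (w m) (Bk w k (Suc m))"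
  let ?B = "we w (Suc m) (Bk w k (Suc m))"
  let ?C = "ge w (Suc m) x \<circ> ?B \<circ> ge w (Suc m) x \<circ> ?B"
  have gx: "ge w m x = T ?e (ge w (Suc m) x)" using x(1) xgen_T[of w "lt x" m] by (simp only: ge_def if_False)
  have wB: "we w m (Bk w (Suc k) m) = T ?s ?B"
    unfolding Bk_Suc by (rule lift_we[OF zeta_ok])
  have "T (?s \<circ> ?s) (?B \<circ> ?B) = id" using Bk_inv[of w m "Suc k"] by (simp add: wB T_comp)
  then have ss: "?s \<circ> ?s = id" by (simp add: T_eq_id)
  have first: "?e \<circ> ?s \<circ> ?e \<circ> ?s = id"
  proof (cases "w m = lt x")
    case True then show ?thesis using ss by (simp add: o_assoc)
  next
    case False
    then have "m < n - 1" using x mn by (cases "m = n - 1") auto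
    have "\<exists>i. Suc m \<le> i \<and> i < n \<and> lt (zeta w i) = w m"
      using exists_zeta[of m n w] False x mn by simp
    then have "\<exists>i. Suc m \<le> i \<and> i < Suc m + k \<and> lt (zeta w i) = w m" using mn by simp
    moreover have "ge w (Suc m) (zeta w m) \<circ> ge w (Suc m) (zeta w m) = id" by (rule ge_inv)
    ultimately have P: "Pc ?s" using key by blast
    have "flip \<circ> ?s \<circ> flip \<circ> ?s = flip \<circ> (?s \<circ> flip) \<circ> ?s" by (simp add: o_assoc)
    also have "\<dots> = (flip \<circ> flip) \<circ> (?s \<circ> ?s)" using P by (simp add: Pc_def o_assoc)
    also have "\<dots> = id" using ss flip_flip by simp
    finally show ?thesis using False by simp
  qed
  have "ge w m x \<circ> we w m (Bk w (Suc k) m) \<circ> ge w m x \<circ> we w m (Bk w (Suc k) m) = T (?e \<circ> ?s \<circ> ?e \<circ> ?s) ?C"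
    by (simp only: gx wB T_comp)
  also have "\<dots> = T id ?C" using first by simp
  finally have E: "ge w m x \<circ> we w m (Bk w (Suc k) m) \<circ> ge w m x \<circ> we w m (Bk w (Suc k) m) = T id ?C" .
  from Suc.IH[OF mn(2)] have ih: "?C \<noteq> id" "in_rist (replicate k True) ?C" by blast+
  have "T id ?C \<noteq> id" using ih(1) T_eq_id by blast
  moreover have "in_rist (True # replicate k True) (T id ?C)" by (rule in_rist_T[OF ih(2)])
  ultimately show ?case unfolding E replicate_Suc by blast
qed

theorem lemma6p3:
  fixes w :: "nat \<Rightarrow> letter" and n :: nat
  assumes "\<not> eventually_constant w"
  shows "\<exists>ws :: gen list. length ws \<le> 2 ^ (n + 2)
           \<and> word_eval w ws \<noteq> id
           \<and> in_rist (replicate n True) (word_eval w ws)"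
proof -
  define x where "x = gl (w (n - 1))"
  have x: "x \<noteq> GA" "lt x = w (n - 1)" by (auto simp: x_def)
  have nc: "\<exists>j \<ge> Suc n. w j \<noteq> lt x"
  proof (rule ccontr)
    assume "\<not> (\<exists>j \<ge> Suc n. w j \<noteq> lt x)"
    then have "\<forall>j\<ge>Suc n. w j = lt x" by blast
    then have "eventually_constant w" unfolding eventually_constant_def by blast
    then show False using assms by blast
  qed
  define B where "B = Bk w n 0"
  define ws where "ws = [x] @ B @ [x] @ B"
  have ev: "word_eval w ws = ge w 0 x \<circ> we w 0 B \<circ> ge w 0 x \<circ> we w 0 B"
    by (simp add: ws_def word_eval_we we_append o_assoc)
  have len: "length B + 1 = 2 ^ (n + 1)" using Bk_len[of w n 0] by (simp add: B_def)
  have "length ws = 2 * (length B + 1)" by (simp add: ws_def)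
  also have "\<dots> = 2 ^ (n + 2)" using len by simp
  finally have "length ws \<le> 2 ^ (n + 2)" by simp
  moreover have "word_eval w ws \<noteq> id \<and> in_rist (replicate n True) (word_eval w ws)"
    using main[OF x nc, of 0 n] unfolding ev B_def by simp
  ultimately show ?thesis by blast
qed

end
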